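(* Let $\xi>0$, $d>0$, $\delta>0$ and $n\in\mathbb{N}$ satisfy $\frac{d\xi^3-\delta}{2}n\geq1$. Let $H=(U\,\dot\cup\, V\,\dot\cup\, W,E)$ be a $3$-uniform hypergraph with $|U|=|V|=|W|=n$ such that $U,V,W$ are weakly $(\delta,d)$-quasirandom in $H$. Then at least $(1-\xi)3n$ vertices of $H$ can be covered by vertex-disjoint tight paths of length at least $\frac{d\xi^3-\delta}{2}n-2$.
   Context: For $V_1,V_2,V_3\subseteq V(H)$, $E(V_1,V_2,V_3)=\{(v_1,v_2,v_3)\in V_1\times V_2\times V_3: \{v_1,v_2,v_3\}\in E\}$ and $e(V_1,V_2,V_3)=|E(V_1,V_2,V_3)|$. The sets $V_1,V_2,V_3$ are weakly $(\delta,d)$-quasirandom in $H$ if for all $U_1\subseteq V_1,U_2\subseteq V_2,U_3\subseteq V_3$, $|e(U_1,U_2,U_3)-d|U_1||U_2||U_3||\leq\delta|V_1||V_2||V_3|$. A tight path of length $\ell$ (number of edges) is a 3-graph on distinct vertices $x_1,\dots,x_{\ell+2}$ with edges $x_ix_{i+1}x_{i+2}$, $i\in[\ell]$. *)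

theory Defs
  imports Complex_Main
begin

definition three_graph :: "'a set \<Rightarrow> 'a set set \<Rightarrow> bool" where
  "three_graph S E \<longleftrightarrow> (\<forall>e\<in>E. e \<subseteq> S \<and> card e = 3)"

definition triple_count :: "'a set set \<Rightarrow> 'a set \<Rightarrow> 'a set \<Rightarrow> 'a set \<Rightarrow> nat" where
  "triple_count E V1 V2 V3 = card {(v1, v2, v3). v1 \<in> V1 \<and> v2 \<in> V2 \<and> v3 \<in> V3 \<and> {v1, v2, v3} \<in> E}"

definition weakly_quasirandom ::
  "real \<Rightarrow> real \<Rightarrow> 'a set set \<Rightarrow> 'a set \<Rightarrow> 'a set \<Rightarrow> 'a set \<Rightarrow> bool" where
  "weakly_quasirandom \<delta> d E V1 V2 V3 \<longleftrightarrow>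
     (\<forall>U1 U2 U3. U1 \<subseteq> V1 \<longrightarrow> U2 \<subseteq> V2 \<longrightarrow> U3 \<subseteq> V3 \<longrightarrow>
        \<bar>real (triple_count E U1 U2 U3) - d * real (card U1) * real (card U2) * real (card U3)\<bar>
          \<le> \<delta> * real (card V1) * real (card V2) * real (card V3))"

text \<open>A tight path in H = (S,E), given as its vertex sequence x_1,...,x_{l+2};
  its length l is the number of edges, i.e. length xs - 2.\<close>
definition tight_path :: "'a set \<Rightarrow> 'a set set \<Rightarrow> 'a list \<Rightarrow> bool" where
  "tight_path S E xs \<longleftrightarrow> distinct xs \<and> length xs \<ge> 2 \<and> set xs \<subseteq> S \<and>
     (\<forall>i. i + 2 < length xs \<longrightarrow> {xs ! i, xs ! (i + 1), xs ! (i + 2)} \<in> E)"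

definition tight_path_length :: "'a list \<Rightarrow> nat" where
  "tight_path_length xs = length xs - 2"

end

theory Submission
  imports Defs
begin


definition p1 :: "'a \<times> 'a \<times> 'a \<Rightarrow> 'a \<times> 'a" where "p1 t = (fst t, fst (snd t))"
definition p2 :: "'a \<times> 'a \<times> 'a \<Rightarrow> 'a \<times> 'a" where "p2 t = (fst (snd t), snd (snd t))"
definition p3 :: "'a \<times> 'a \<times> 'a \<Rightarrow> 'a \<times> 'a" where "p3 t = (fst t, snd (snd t))"

definition good :: "nat \<Rightarrow> ('a \<times> 'a \<times> 'a) set \<Rightarrow> bool" where
  "good k G \<longleftrightarrow> (\<forall>t\<in>G. k \<le> card {s\<in>G. p1 s = p1 t} \<and> k \<le> card {s\<in>G. p2 s = p2 t}
      \<and> k \<le> card {s\<in>G. p3 s = p3 t})"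

definition npairs :: "('a \<times> 'a \<times> 'a) set \<Rightarrow> nat" where
  "npairs F = card (p1 ` F) + card (p2 ` F) + card (p3 ` F)"

lemma remove_proj:
  assumes "finite F" "t \<in> F"
  shows "card (\<pi> ` (F - {s\<in>F. \<pi> s = \<pi> t})) < card (\<pi> ` F)"
proof (rule psubset_card_mono)
  show "finite (\<pi> ` F)" using assms by simp
  have "\<pi> ` (F - {s\<in>F. \<pi> s = \<pi> t}) \<subseteq> \<pi> ` F - {\<pi> t}" by auto
  moreover have "\<pi> t \<in> \<pi> ` F" using assms by auto
  ultimately show "\<pi> ` (F - {s\<in>F. \<pi> s = \<pi> t}) \<subset> \<pi> ` F" by blast
qed

lemma proj_mono: "finite F \<Longrightarrow> card (\<rho> ` (F - X)) \<le> card (\<rho> ` F)"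
  by (intro card_mono) auto

lemma deletion: "finite F \<Longrightarrow> \<exists>G\<subseteq>F. good k G \<and> card F \<le> card G + (k - 1) * npairs F"
proof (induction "card F" arbitrary: F rule: less_induct)
  case less
  show ?case
  proof (cases "good k F")
    case True then show ?thesis by auto
  next
    case False
    then obtain t \<pi> where t: "t \<in> F" and pi: "\<pi> \<in> {p1, p2, p3}"
      and lt: "card {s\<in>F. \<pi> s = \<pi> t} < k"
    proof -
      from False obtain t where t: "t \<in> F" and
        "card {s\<in>F. p1 s = p1 t} < k \<or> card {s\<in>F. p2 s = p2 t} < k \<or> card {s\<in>F. p3 s = p3 t} < k"
        unfolding good_def by (auto simp: not_le)
      then show ?thesis using that by blast
    qed
    define S where "S = {s\<in>F. \<pi> s = \<pi> t}"
    define F' where "F' = F - S"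
    have fS: "finite S" using less.prems S_def by simp
    have tS: "t \<in> S" using t S_def by simp
    have cF: "card F = card F' + card S"
    proof -
      have "S \<subseteq> F" using S_def by auto
      then show ?thesis
      proof -
        have "card (F - S) = card F - card S" using \<open>S \<subseteq> F\<close> fS by (simp add: card_Diff_subset)
        moreover have "card S \<le> card F" using \<open>S \<subseteq> F\<close> less.prems by (simp add: card_mono)
        ultimately show ?thesis unfolding F'_def by simp
      qed
    qed
    have "S \<noteq> {}" using tS by blast
    hence "card S > 0" using fS by (simp add: card_gt_0_iff)
    hence lt2: "card F' < card F" using cF by simp
    have fF': "finite F'" using less.prems F'_def by simp
    have a1: "card (p1 ` F') \<le> card (p1 ` F)" "card (p2 ` F') \<le> card (p2 ` F)"
       "card (p3 ` F') \<le> card (p3 ` F)" unfolding F'_def by (rule proj_mono[OF less.prems])+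
    have a2: "card (\<pi> ` F') < card (\<pi> ` F)"
      using remove_proj[OF less.prems t] F'_def S_def by simp
    have np: "npairs F' < npairs F"
    proof -
      from pi have "\<pi> = p1 \<or> \<pi> = p2 \<or> \<pi> = p3" by simp
      then show ?thesis using a1 a2 unfolding npairs_def by (elim disjE) simp_all
    qed
    obtain G where G: "G \<subseteq> F'" "good k G" "card F' \<le> card G + (k - 1) * npairs F'"
      using less.hyps[OF lt2 fF'] by blast
    have "card S \<le> k - 1" using lt S_def by simp
    hence "card F \<le> card G + (k - 1) * (npairs F' + 1)" using cF G(3) by (simp add: add_mult_distrib2)
    also have "\<dots> \<le> card G + (k - 1) * npairs F" using np by (intro add_left_mono mult_le_mono2) simp
    finally have "card F \<le> card G + (k - 1) * npairs F" .
    moreover have "G \<subseteq> F" using G(1) unfolding F'_def by blast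
    ultimately show ?thesis using G(2) by blast
  qed
qed



definition part :: "'a set \<Rightarrow> 'a set \<Rightarrow> 'a set \<Rightarrow> nat \<Rightarrow> 'a set" where
  "part A B C i = (if i mod 3 = 0 then A else if i mod 3 = 1 then B else C)"

definition trip :: "nat \<Rightarrow> 'a \<Rightarrow> 'a \<Rightarrow> 'a \<Rightarrow> 'a \<times> 'a \<times> 'a" where
  "trip i a b c = (if i mod 3 = 0 then (a, b, c) else if i mod 3 = 1 then (c, a, b) else (b, c, a))"

definition pinv :: "'a set \<Rightarrow> 'a set \<Rightarrow> 'a set \<Rightarrow> ('a \<times> 'a \<times> 'a) set \<Rightarrow> 'a list \<Rightarrow> bool" where
  "pinv A B C G xs \<longleftrightarrow> distinct xs \<and> 3 \<le> length xs \<and> (\<forall>i<length xs. xs ! i \<in> part A B C i)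
     \<and> (\<forall>i. i + 2 < length xs \<longrightarrow> trip i (xs ! i) (xs ! (i + 1)) (xs ! (i + 2)) \<in> G)"

lemma part_same:
  assumes "A \<inter> B = {}" "A \<inter> C = {}" "B \<inter> C = {}"
    "y \<in> part A B C i" "y \<in> part A B C j"
  shows "i mod 3 = j mod 3"
  using assms unfolding part_def by (auto split: if_splits)

lemma card_res_le:
  assumes "r = j mod 3"
  shows "card {i. i < j \<and> i mod 3 = r} \<le> j div 3"
proof -
  have "{i. i < j \<and> i mod 3 = r} \<subseteq> (\<lambda>q. 3 * q + r) ` {..<j div 3}"
  proof
    fix i assume "i \<in> {i. i < j \<and> i mod 3 = r}"
    hence "i < j" "i mod 3 = r" by auto
    moreover have "i = 3 * (i div 3) + i mod 3" "j = 3 * (j div 3) + j mod 3" by simp_all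
    ultimately have "i = 3 * (i div 3) + r" "i div 3 < j div 3" using assms by linarith+
    thus "i \<in> (\<lambda>q. 3 * q + r) ` {..<j div 3}" by blast
  qed
  hence "card {i. i < j \<and> i mod 3 = r} \<le> card ((\<lambda>q. 3 * q + r) ` {..<j div 3})"
    by (intro card_mono) auto
  also have "\<dots> \<le> j div 3" using card_image_le[of "{..<j div 3}"] by simp
  finally show ?thesis .
qed

lemma card_res_eq:
  assumes "r < 3"
  shows "card {i. i < 3 * k \<and> i mod 3 = r} = k"
proof -
  have "{i. i < 3 * k \<and> i mod 3 = r} = (\<lambda>q. 3 * q + r) ` {..<k}"
  proof
    show "{i. i < 3 * k \<and> i mod 3 = r} \<subseteq> (\<lambda>q. 3 * q + r) ` {..<k}"
    proof
      fix i assume "i \<in> {i. i < 3 * k \<and> i mod 3 = r}"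
      hence "i < 3 * k" "i mod 3 = r" by auto
      moreover have "i = 3 * (i div 3) + i mod 3" by simp
      ultimately have "i = 3 * (i div 3) + r" "i div 3 < k" by linarith+
      thus "i \<in> (\<lambda>q. 3 * q + r) ` {..<k}" by blast
    qed
    show "(\<lambda>q. 3 * q + r) ` {..<k} \<subseteq> {i. i < 3 * k \<and> i mod 3 = r}"
    proof
      fix i assume "i \<in> (\<lambda>q. 3 * q + r) ` {..<k}"
      then obtain q where "q < k" "i = 3 * q + r" by auto
      thus "i \<in> {i. i < 3 * k \<and> i mod 3 = r}" using assms by simp
    qed
  qed
  moreover have "inj_on (\<lambda>q. 3 * q + r) {..<k}" by (auto simp: inj_on_def)
  ultimately show ?thesis by (simp add: card_image)
qed

lemma extend:
  assumes dis: "A \<inter> B = {}" "A \<inter> C = {}" "B \<inter> C = {}"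
    and fin: "finite A" "finite B" "finite C"
    and GT: "G \<subseteq> A \<times> B \<times> C" and gd: "good k G"
    and P: "pinv A B C G xs" and len: "length xs < 3 * k"
  shows "\<exists>ys. pinv A B C G ys \<and> length ys = Suc (length xs)"
proof -
  define j where "j = length xs"
  have j3: "3 \<le> j" using P unfolding pinv_def j_def by simp
  define x where "x = xs ! (j - 3)"
  define a where "a = xs ! (j - 2)"
  define b where "b = xs ! (j - 1)"
  have finG: "finite G" using GT fin by (meson finite_SigmaI finite_subset)
  have t0: "trip (j - 3) x a b \<in> G"
  proof -
    have "(j - 3) + 2 < length xs" using j3 j_def by simp
    hence "trip (j - 3) (xs ! (j - 3)) (xs ! (j - 3 + 1)) (xs ! (j - 3 + 2)) \<in> G"
      using P unfolding pinv_def by blast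
    moreover have "j - 3 + 1 = j - 2" "j - 3 + 2 = j - 1" using j3 by simp_all
    ultimately show ?thesis unfolding x_def a_def b_def by simp
  qed
  have e3: "j = (j - 3) + 3" using j3 by simp
  have m3: "(j - 3) mod 3 = j mod 3" by (subst (2) e3) (simp only: mod_add_self2)
  have e2: "j + 1 = (j - 2) + 3" using j3 by simp
  have m2: "(j - 2) mod 3 = (j + 1) mod 3" by (subst e2) (simp only: mod_add_self2)
  have "\<exists>Z. finite Z \<and> k \<le> card Z \<and> Z \<subseteq> part A B C j \<and> (\<forall>z\<in>Z. trip (j - 2) a b z \<in> G)"
  proof -
    have "j mod 3 = 0 \<or> j mod 3 = 1 \<or> j mod 3 = 2" by linarith
    then show ?thesis
    proof (elim disjE)
      assume r: "j mod 3 = 0"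
      hence tt: "(x, a, b) \<in> G" using t0 m3 unfolding trip_def by simp
      define S where "S = {s\<in>G. p2 s = (a, b)}"
      have kS: "k \<le> card S" using gd tt unfolding good_def S_def by (force simp: p2_def)
      have inj: "inj_on fst S" unfolding S_def p2_def inj_on_def by (auto simp: prod_eq_iff)
      have "finite S" using finG S_def by simp
      have "card (fst ` S) = card S" using inj by (simp add: card_image)
      moreover have "fst ` S \<subseteq> part A B C j" using GT r unfolding S_def part_def by auto
      moreover have "\<forall>z\<in>fst ` S. trip (j - 2) a b z \<in> G"
      proof
        fix z assume "z \<in> fst ` S"
        then obtain s where "s \<in> S" "z = fst s" by blast
        hence "(z, a, b) \<in> G" unfolding S_def p2_def by (auto simp: prod_eq_iff)
        moreover have "(j - 2) mod 3 = 1" using m2 r by (simp add: mod_Suc)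
        ultimately show "trip (j - 2) a b z \<in> G" unfolding trip_def by simp
      qed
      moreover have "finite (fst ` S)" using \<open>finite S\<close> by simp
      ultimately show ?thesis using kS by (intro exI[of _ "fst ` S"]) simp
    next
      assume r: "j mod 3 = 1"
      hence tt: "(b, x, a) \<in> G" using t0 m3 unfolding trip_def by simp
      define S where "S = {s\<in>G. p3 s = (b, a)}"
      have kS: "k \<le> card S" using gd tt unfolding good_def S_def by (force simp: p3_def)
      have inj: "inj_on (\<lambda>s. fst (snd s)) S" unfolding S_def p3_def inj_on_def by (auto simp: prod_eq_iff)
      have "finite S" using finG S_def by simp
      have "card ((\<lambda>s. fst (snd s)) ` S) = card S" using inj by (simp add: card_image)
      moreover have "(\<lambda>s. fst (snd s)) ` S \<subseteq> part A B C j" using GT r unfolding S_def part_def by auto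
      moreover have "\<forall>z\<in>(\<lambda>s. fst (snd s)) ` S. trip (j - 2) a b z \<in> G"
      proof
        fix z assume "z \<in> (\<lambda>s. fst (snd s)) ` S"
        then obtain s where "s \<in> S" "z = fst (snd s)" by blast
        hence "(b, z, a) \<in> G" unfolding S_def p3_def by (auto simp: prod_eq_iff)
        moreover have "(j - 2) mod 3 = 2" using m2 r by (simp add: mod_Suc)
        ultimately show "trip (j - 2) a b z \<in> G" unfolding trip_def by simp
      qed
      moreover have "finite ((\<lambda>s. fst (snd s)) ` S)" using \<open>finite S\<close> by simp
      ultimately show ?thesis using kS by (intro exI[of _ "(\<lambda>s. fst (snd s)) ` S"]) simp
    next
      assume r: "j mod 3 = 2"
      hence tt: "(a, b, x) \<in> G" using t0 m3 unfolding trip_def by simp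
      define S where "S = {s\<in>G. p1 s = (a, b)}"
      have kS: "k \<le> card S" using gd tt unfolding good_def S_def by (force simp: p1_def)
      have inj: "inj_on (\<lambda>s. snd (snd s)) S" unfolding S_def p1_def inj_on_def by (auto simp: prod_eq_iff)
      have "finite S" using finG S_def by simp
      have "card ((\<lambda>s. snd (snd s)) ` S) = card S" using inj by (simp add: card_image)
      moreover have "(\<lambda>s. snd (snd s)) ` S \<subseteq> part A B C j" using GT r unfolding S_def part_def by auto
      moreover have "\<forall>z\<in>(\<lambda>s. snd (snd s)) ` S. trip (j - 2) a b z \<in> G"
      proof
        fix z assume "z \<in> (\<lambda>s. snd (snd s)) ` S"
        then obtain s where "s \<in> S" "z = snd (snd s)" by blast
        hence "(a, b, z) \<in> G" unfolding S_def p1_def by (auto simp: prod_eq_iff)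
        moreover have "(j - 2) mod 3 = 0" using m2 r by (simp add: mod_Suc)
        ultimately show "trip (j - 2) a b z \<in> G" unfolding trip_def by simp
      qed
      moreover have "finite ((\<lambda>s. snd (snd s)) ` S)" using \<open>finite S\<close> by simp
      ultimately show ?thesis using kS by (intro exI[of _ "(\<lambda>s. snd (snd s)) ` S"]) simp
    qed
  qed
  then obtain Z where Z: "finite Z" "k \<le> card Z" "Z \<subseteq> part A B C j" "\<forall>z\<in>Z. trip (j - 2) a b z \<in> G"
    by blast
  have sub: "set xs \<inter> part A B C j \<subseteq> (\<lambda>i. xs ! i) ` {i. i < j \<and> i mod 3 = j mod 3}"
  proof
    fix y assume y: "y \<in> set xs \<inter> part A B C j"
    then obtain i where i: "i < j" "xs ! i = y" unfolding j_def by (auto simp: in_set_conv_nth)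
    have "y \<in> part A B C i" using P i unfolding pinv_def j_def by auto
    hence "i mod 3 = j mod 3" using part_same[OF dis] y by blast
    thus "y \<in> (\<lambda>i. xs ! i) ` {i. i < j \<and> i mod 3 = j mod 3}" using i by blast
  qed
  have "card (set xs \<inter> part A B C j) \<le> card ((\<lambda>i. xs ! i) ` {i. i < j \<and> i mod 3 = j mod 3})"
    using sub by (intro card_mono) auto
  also have "\<dots> \<le> card {i. i < j \<and> i mod 3 = j mod 3}" by (rule card_image_le) simp
  also have "\<dots> \<le> j div 3" by (rule card_res_le) simp
  also have "\<dots> < k" using len j_def by linarith
  finally have ck: "card (set xs \<inter> part A B C j) < k" .
  have "\<not> Z \<subseteq> set xs \<inter> part A B C j"
  proof
    assume "Z \<subseteq> set xs \<inter> part A B C j"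
    hence "card Z \<le> card (set xs \<inter> part A B C j)" by (intro card_mono) auto
    thus False using ck Z(2) by linarith
  qed
  then obtain z where z: "z \<in> Z" "z \<notin> set xs" using Z(3) by blast
  define ys where "ys = xs @ [z]"
  have "pinv A B C G ys"
    unfolding pinv_def
  proof (intro conjI allI impI)
    show "distinct ys" using P z unfolding ys_def pinv_def by simp
    show "3 \<le> length ys" using j3 j_def ys_def by simp
  next
    fix i assume "i < length ys"
    hence "i < j \<or> i = j" using ys_def j_def by auto
    thus "ys ! i \<in> part A B C i"
    proof
      assume "i < j" thus ?thesis using P unfolding ys_def pinv_def j_def by (simp add: nth_append)
    next
      assume "i = j" thus ?thesis using z Z(3) unfolding ys_def j_def by auto
    qed
  next
    fix i assume "i + 2 < length ys"
    hence "i + 2 < j \<or> i = j - 2" using ys_def j_def by auto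
    thus "trip i (ys ! i) (ys ! (i + 1)) (ys ! (i + 2)) \<in> G"
    proof
      assume "i + 2 < j" thus ?thesis using P unfolding ys_def pinv_def j_def by (simp add: nth_append)
    next
      assume ii: "i = j - 2"
      have q: "i + 1 = j - 1" "i + 2 = j" "i < j" "j - 1 < j" using ii j3 by simp_all
      have "ys ! i = a" "ys ! (i + 1) = b" "ys ! (i + 2) = z"
        unfolding q(1,2) using q(3,4) unfolding ys_def a_def b_def ii j_def by (simp_all add: nth_append)
      thus ?thesis using Z(4) z ii by simp
    qed
  qed
  moreover have "length ys = Suc (length xs)" using ys_def by simp
  ultimately show ?thesis by blast
qed



lemma grow:
  assumes dis: "A \<inter> B = {}" "A \<inter> C = {}" "B \<inter> C = {}"
    and fin: "finite A" "finite B" "finite C"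
    and GT: "G \<subseteq> A \<times> B \<times> C" and gd: "good k G"
    and x0: "pinv A B C G xs0" "length xs0 = 3"
  shows "3 \<le> j \<Longrightarrow> j \<le> 3 * k \<Longrightarrow> \<exists>xs. pinv A B C G xs \<and> length xs = j"
proof (induction j)
  case 0 then show ?case by simp
next
  case (Suc j)
  show ?case
  proof (cases "Suc j = 3")
    case True then show ?thesis using x0 by auto
  next
    case False
    hence "3 \<le> j" "j \<le> 3 * k" using Suc.prems by auto
    then obtain xs where xs: "pinv A B C G xs" "length xs = j" using Suc.IH by blast
    have "length xs < 3 * k" using xs Suc.prems by simp
    from extend[OF dis fin GT gd xs(1) this] show ?thesis using xs(2) by simp
  qed
qed

lemma part_cong: "i mod 3 = r mod 3 \<Longrightarrow> part A B C i = part A B C r"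
  unfolding part_def by simp

lemma count_part:
  assumes dis: "A \<inter> B = {}" "A \<inter> C = {}" "B \<inter> C = {}"
    and P: "pinv A B C G xs" and len: "length xs = 3 * k" and r: "r < 3"
  shows "card (set xs \<inter> part A B C r) = k"
proof -
  have eq: "set xs \<inter> part A B C r = (\<lambda>i. xs ! i) ` {i. i < 3 * k \<and> i mod 3 = r}"
  proof
    show "set xs \<inter> part A B C r \<subseteq> (\<lambda>i. xs ! i) ` {i. i < 3 * k \<and> i mod 3 = r}"
    proof
      fix y assume y: "y \<in> set xs \<inter> part A B C r"
      then obtain i where i: "i < 3 * k" "xs ! i = y" using len by (auto simp: in_set_conv_nth)
      have "y \<in> part A B C i" using P i len unfolding pinv_def by auto
      hence "i mod 3 = r mod 3" using part_same[OF dis] y by blast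
      hence "i mod 3 = r" using r by simp
      thus "y \<in> (\<lambda>i. xs ! i) ` {i. i < 3 * k \<and> i mod 3 = r}" using i by blast
    qed
    show "(\<lambda>i. xs ! i) ` {i. i < 3 * k \<and> i mod 3 = r} \<subseteq> set xs \<inter> part A B C r"
    proof
      fix y assume "y \<in> (\<lambda>i. xs ! i) ` {i. i < 3 * k \<and> i mod 3 = r}"
      then obtain i where i: "i < 3 * k" "i mod 3 = r" "y = xs ! i" by blast
      have "xs ! i \<in> part A B C i" using P i len unfolding pinv_def by auto
      moreover have "part A B C i = part A B C r" using i r by (intro part_cong) simp
      ultimately show "y \<in> set xs \<inter> part A B C r" using i len by auto
    qed
  qed
  have "inj_on (\<lambda>i. xs ! i) {i. i < 3 * k \<and> i mod 3 = r}"
    using P len unfolding pinv_def by (intro inj_on_nth) auto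
  hence "card (set xs \<inter> part A B C r) = card {i. i < 3 * k \<and> i mod 3 = r}"
    unfolding eq by (rule card_image)
  also have "\<dots> = k" using r by (rule card_res_eq)
  finally show ?thesis .
qed

lemma trip_E:
  assumes "trip i a b c \<in> {(u, v, w). u \<in> A \<and> v \<in> B \<and> w \<in> C \<and> {u, v, w} \<in> E}"
  shows "{a, b, c} \<in> E"
  using assms unfolding trip_def by (auto split: if_splits simp: insert_commute)

lemma find_path:
  fixes \<xi> d \<delta> L :: real and n m :: nat
  assumes xi: "\<xi> > 0" and dpos: "d > 0"
    and Ldef: "L = (d * \<xi> ^ 3 - \<delta>) / 2 * real n" and L1: "L \<ge> 1"
    and fin: "finite U" "finite V" "finite W"
    and dis: "U \<inter> V = {}" "U \<inter> W = {}" "V \<inter> W = {}"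
    and cards: "card U = n" "card V = n" "card W = n"
    and qr: "weakly_quasirandom \<delta> d E U V W"
    and sub: "A \<subseteq> U" "B \<subseteq> V" "C \<subseteq> W"
    and cm: "card A = m" "card B = m" "card C = m"
    and big: "real m \<ge> \<xi> * real n"
  shows "\<exists>xs k. 1 \<le> k \<and> length xs = 3 * k \<and> L \<le> real (3 * k) \<and> set xs \<subseteq> A \<union> B \<union> C
     \<and> tight_path (U \<union> V \<union> W) E xs \<and> card (set xs \<inter> A) = k \<and> card (set xs \<inter> B) = k
     \<and> card (set xs \<inter> C) = k"
proof -
  have disA: "A \<inter> B = {}" "A \<inter> C = {}" "B \<inter> C = {}" using dis sub by blast+
  have finA: "finite A" "finite B" "finite C" using fin sub finite_subset by blast+
  define T where "T = {(u, v, w). u \<in> A \<and> v \<in> B \<and> w \<in> C \<and> {u, v, w} \<in> E}"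
  have TABC: "T \<subseteq> A \<times> B \<times> C" unfolding T_def by auto
  have finT: "finite T" using TABC finA by (meson finite_SigmaI finite_subset)
  have cT: "card T = triple_count E A B C" unfolding T_def triple_count_def by simp
  have q: "\<bar>real (card T) - d * real m * real m * real m\<bar> \<le> \<delta> * real n * real n * real n"
    using qr[unfolded weakly_quasirandom_def, rule_format, OF sub(1) sub(2) sub(3)]
    unfolding cT[symmetric] cm cards .
  have npos: "n > 0"
  proof (rule ccontr)
    assume "\<not> n > 0" hence "n = 0" by simp
    thus False using L1 Ldef by simp
  qed
  have mn: "m \<le> n" using card_mono[OF fin(1) sub(1)] cm cards by simp
  have "(\<xi> * real n) ^ 3 \<le> real m ^ 3" using big xi by (intro power_mono) auto
  hence "d * (\<xi> * real n) ^ 3 \<le> d * real m ^ 3" using dpos by simp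
  hence cTL: "real (card T) \<ge> 2 * L * real n ^ 2"
    using q unfolding Ldef by (simp add: power3_eq_cube power2_eq_square algebra_simps)
  define k where "k = nat \<lceil>L / 3\<rceil>"
  have kL: "real k \<ge> L / 3" "real k < L / 3 + 1" unfolding k_def using L1 by linarith+
  have k1: "k \<ge> 1" unfolding k_def using L1 by linarith
  obtain G where G: "G \<subseteq> T" "good k G" "card T \<le> card G + (k - 1) * npairs T"
    using deletion[OF finT] by blast
  have np: "npairs T \<le> 3 * (m * m)"
  proof -
    have "card (p1 ` T) \<le> m * m"
    proof -
      have "p1 ` T \<subseteq> A \<times> B" using TABC by (auto simp: p1_def)
      hence "card (p1 ` T) \<le> card (A \<times> B)" using finA by (intro card_mono) auto
      thus ?thesis using cm by (simp add: card_cartesian_product)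
    qed
    moreover have "card (p2 ` T) \<le> m * m"
    proof -
      have "p2 ` T \<subseteq> B \<times> C" using TABC by (auto simp: p2_def)
      hence "card (p2 ` T) \<le> card (B \<times> C)" using finA by (intro card_mono) auto
      thus ?thesis using cm by (simp add: card_cartesian_product)
    qed
    moreover have "card (p3 ` T) \<le> m * m"
    proof -
      have "p3 ` T \<subseteq> A \<times> C" using TABC by (auto simp: p3_def)
      hence "card (p3 ` T) \<le> card (A \<times> C)" using finA by (intro card_mono) auto
      thus ?thesis using cm by (simp add: card_cartesian_product)
    qed
    ultimately show ?thesis unfolding npairs_def by simp
  qed
  have "G \<noteq> {}"
  proof
    assume "G = {}"
    hence "card T \<le> (k - 1) * (3 * (m * m))" using G(3) np
      by (metis add_0 card.empty le_trans mult_le_mono2)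
    hence "real (card T) \<le> real (k - 1) * (3 * (real m * real m))"
      by (metis of_nat_le_iff of_nat_mult of_nat_numeral)
    also have "\<dots> \<le> real (k - 1) * (3 * (real n * real n))"
      using mn by (intro mult_left_mono) (auto intro: mult_mono)
    also have "\<dots> = (real k - 1) * 3 * (real n * real n)" using k1 by (simp add: of_nat_diff)
    also have "\<dots> < L * (real n * real n)"
      using kL npos by (intro mult_strict_right_mono) auto
    finally have "real (card T) < L * real n ^ 2" by (simp add: power2_eq_square)
    moreover have "L * real n ^ 2 \<le> 2 * L * real n ^ 2" using L1 by simp
    ultimately show False using cTL by linarith
  qed
  then obtain u v w where uvw: "(u, v, w) \<in> G" by auto
  hence uvwT: "u \<in> A" "v \<in> B" "w \<in> C" using G(1) TABC by auto
  have GABC: "G \<subseteq> A \<times> B \<times> C" using G(1) TABC by blast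
  have x0: "pinv A B C G [u, v, w]"
    unfolding pinv_def
  proof (intro conjI allI impI)
    show "distinct [u, v, w]" using uvwT disA by auto
    show "3 \<le> length [u, v, w]" by simp
  next
    fix i assume "i < length [u, v, w]"
    hence "i = 0 \<or> i = 1 \<or> i = 2" by auto
    thus "[u, v, w] ! i \<in> part A B C i" using uvwT unfolding part_def by auto
  next
    fix i assume "i + 2 < length [u, v, w]"
    hence "i = 0" by simp
    thus "trip i ([u, v, w] ! i) ([u, v, w] ! (i + 1)) ([u, v, w] ! (i + 2)) \<in> G"
      using uvw unfolding trip_def by simp
  qed
  obtain xs where xs: "pinv A B C G xs" "length xs = 3 * k"
    using grow[OF disA finA GABC G(2) x0, of "3 * k"] k1 by auto
  have pA: "\<And>i. i < length xs \<Longrightarrow> xs ! i \<in> A \<union> B \<union> C"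
    using xs(1) unfolding pinv_def part_def by (auto split: if_splits)
  have setxs: "set xs \<subseteq> A \<union> B \<union> C"
  proof
    fix y assume "y \<in> set xs"
    then obtain i where "i < length xs" "xs ! i = y" by (auto simp: in_set_conv_nth)
    thus "y \<in> A \<union> B \<union> C" using pA by blast
  qed
  have tp: "tight_path (U \<union> V \<union> W) E xs"
    unfolding tight_path_def
  proof (intro conjI allI impI)
    show "distinct xs" using xs(1) unfolding pinv_def by simp
    show "2 \<le> length xs" using xs(1) unfolding pinv_def by simp
    show "set xs \<subseteq> U \<union> V \<union> W" using setxs sub by blast
  next
    fix i assume "i + 2 < length xs"
    hence "trip i (xs ! i) (xs ! (i + 1)) (xs ! (i + 2)) \<in> T" using xs(1) G(1) unfolding pinv_def by blast
    thus "{xs ! i, xs ! (i + 1), xs ! (i + 2)} \<in> E" unfolding T_def by (rule trip_E)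
  qed
  have cA: "card (set xs \<inter> A) = k" using count_part[OF disA xs, of 0] by (simp add: part_def)
  have cB: "card (set xs \<inter> B) = k" using count_part[OF disA xs, of 1] by (simp add: part_def)
  have cC: "card (set xs \<inter> C) = k" using count_part[OF disA xs, of 2] by (simp add: part_def)
  have "L \<le> real (3 * k)" using kL by simp
  thus ?thesis using k1 xs(2) setxs tp cA cB cC by blast
qed



lemma iterate:
  fixes \<xi> d \<delta> L :: real and n m :: nat
  assumes xi: "\<xi> > 0" and dpos: "d > 0"
    and Ldef: "L = (d * \<xi> ^ 3 - \<delta>) / 2 * real n" and L1: "L \<ge> 1"
    and fin: "finite U" "finite V" "finite W"
    and dis: "U \<inter> V = {}" "U \<inter> W = {}" "V \<inter> W = {}"
    and cards: "card U = n" "card V = n" "card W = n"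
    and qr: "weakly_quasirandom \<delta> d E U V W"
  shows "\<forall>A B C. A \<subseteq> U \<longrightarrow> B \<subseteq> V \<longrightarrow> C \<subseteq> W \<longrightarrow> card A = m \<longrightarrow> card B = m \<longrightarrow> card C = m \<longrightarrow>
    (\<exists>P :: 'a list set. finite P \<and> (\<forall>p\<in>P. tight_path (U \<union> V \<union> W) E p \<and> set p \<subseteq> A \<union> B \<union> C
       \<and> L - 2 \<le> real (tight_path_length p))
     \<and> (\<forall>p\<in>P. \<forall>q\<in>P. p \<noteq> q \<longrightarrow> set p \<inter> set q = {})
     \<and> 3 * real m - 3 * \<xi> * real n \<le> real (card (\<Union>p\<in>P. set p)))"
proof (induction m rule: less_induct)
  case (less m)
  show ?case
  proof (intro allI impI)
    fix A B C assume sub: "A \<subseteq> U" "B \<subseteq> V" "C \<subseteq> W" and cm: "card A = m" "card B = m" "card C = m"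
    show "\<exists>P :: 'a list set. finite P \<and> (\<forall>p\<in>P. tight_path (U \<union> V \<union> W) E p \<and> set p \<subseteq> A \<union> B \<union> C
       \<and> L - 2 \<le> real (tight_path_length p))
     \<and> (\<forall>p\<in>P. \<forall>q\<in>P. p \<noteq> q \<longrightarrow> set p \<inter> set q = {})
     \<and> 3 * real m - 3 * \<xi> * real n \<le> real (card (\<Union>p\<in>P. set p))"
    proof (cases "real m < \<xi> * real n")
      case True
      thus ?thesis by (intro exI[of _ "{}"]) simp
    next
      case False
      hence big: "real m \<ge> \<xi> * real n" by simp
      obtain xs k where xk: "1 \<le> k" "length xs = 3 * k" "L \<le> real (3 * k)" "set xs \<subseteq> A \<union> B \<union> C"
        "tight_path (U \<union> V \<union> W) E xs" "card (set xs \<inter> A) = k" "card (set xs \<inter> B) = k"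
        "card (set xs \<inter> C) = k"
        using find_path[OF xi dpos Ldef L1 fin dis cards qr sub cm big] by blast
      have finA: "finite A" "finite B" "finite C" using fin sub finite_subset by blast+
      have km: "k \<le> m" using xk(6) cm(1) finA(1) by (metis card_mono inf_le2)
      have c1: "card (A - set xs) = m - k"
        using finA(1) xk(6) cm(1) by (simp add: card_Diff_subset_Int inf_commute)
      have c2: "card (B - set xs) = m - k"
        using finA(2) xk(7) cm(2) by (simp add: card_Diff_subset_Int inf_commute)
      have c3: "card (C - set xs) = m - k"
        using finA(3) xk(8) cm(3) by (simp add: card_Diff_subset_Int inf_commute)
      have mk: "m - k < m" using km xk(1) by simp
      have s: "A - set xs \<subseteq> U" "B - set xs \<subseteq> V" "C - set xs \<subseteq> W" using sub by auto
      have ex: "\<exists>P :: 'a list set. finite P \<and> (\<forall>p\<in>P. tight_path (U \<union> V \<union> W) E p \<and> set p \<subseteq> (A - set xs) \<union> (B - set xs) \<union> (C - set xs)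
           \<and> L - 2 \<le> real (tight_path_length p))
         \<and> (\<forall>p\<in>P. \<forall>q\<in>P. p \<noteq> q \<longrightarrow> set p \<inter> set q = {})
         \<and> 3 * real (m - k) - 3 * \<xi> * real n \<le> real (card (\<Union>p\<in>P. set p))"
        using less.IH[OF mk, rule_format, OF s(1) s(2) s(3) c1 c2 c3] .
      from ex obtain P where PP: "finite P \<and> (\<forall>p\<in>P. tight_path (U \<union> V \<union> W) E p \<and> set p \<subseteq> (A - set xs) \<union> (B - set xs) \<union> (C - set xs)
           \<and> L - 2 \<le> real (tight_path_length p))
         \<and> (\<forall>p\<in>P. \<forall>q\<in>P. p \<noteq> q \<longrightarrow> set p \<inter> set q = {})
         \<and> 3 * real (m - k) - 3 * \<xi> * real n \<le> real (card (\<Union>p\<in>P. set p))" ..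
      have P: "finite P"
        "\<forall>p\<in>P. tight_path (U \<union> V \<union> W) E p \<and> set p \<subseteq> (A - set xs) \<union> (B - set xs) \<union> (C - set xs)
           \<and> L - 2 \<le> real (tight_path_length p)"
        "\<forall>p\<in>P. \<forall>q\<in>P. p \<noteq> q \<longrightarrow> set p \<inter> set q = {}"
        "3 * real (m - k) - 3 * \<xi> * real n \<le> real (card (\<Union>p\<in>P. set p))"
        using PP by blast+
      define Q where "Q = insert xs P"
      have dxs: "\<forall>p\<in>P. set p \<inter> set xs = {}" using P(2) by blast
      have "finite Q" using P(1) Q_def by simp
      moreover have "\<forall>p\<in>Q. tight_path (U \<union> V \<union> W) E p \<and> set p \<subseteq> A \<union> B \<union> C
           \<and> L - 2 \<le> real (tight_path_length p)"
      proof
        fix p assume "p \<in> Q"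
        hence "p = xs \<or> p \<in> P" using Q_def by simp
        thus "tight_path (U \<union> V \<union> W) E p \<and> set p \<subseteq> A \<union> B \<union> C \<and> L - 2 \<le> real (tight_path_length p)"
        proof
          assume "p = xs"
          moreover have "real (tight_path_length xs) = real (3 * k) - 2"
            using xk(1,2) unfolding tight_path_length_def by (simp add: of_nat_diff)
          ultimately show ?thesis using xk(3,4,5) by simp
        next
          assume "p \<in> P" thus ?thesis using P(2) by blast
        qed
      qed
      moreover have "\<forall>p\<in>Q. \<forall>q\<in>Q. p \<noteq> q \<longrightarrow> set p \<inter> set q = {}"
        using P(3) dxs unfolding Q_def by blast
      moreover have "3 * real m - 3 * \<xi> * real n \<le> real (card (\<Union>p\<in>Q. set p))"
      proof -
        have un: "(\<Union>p\<in>Q. set p) = set xs \<union> (\<Union>p\<in>P. set p)" unfolding Q_def by simp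
        have "set xs \<inter> (\<Union>p\<in>P. set p) = {}" using dxs by blast
        moreover have "finite (\<Union>p\<in>P. set p)" using P(1) by simp
        ultimately have "card (\<Union>p\<in>Q. set p) = card (set xs) + card (\<Union>p\<in>P. set p)"
          unfolding un by (simp add: card_Un_disjoint)
        moreover have "card (set xs) = 3 * k"
          using xk(2,5) unfolding tight_path_def by (simp add: distinct_card)
        moreover have "real (m - k) = real m - real k" using km by (simp add: of_nat_diff)
        ultimately show ?thesis using P(4) by simp
      qed
      ultimately show ?thesis by blast
    qed
  qed
qed


theorem lemma6p2:
  fixes \<xi> d \<delta> :: real and n :: nat
    and U V W :: "'a set" and E :: "'a set set"
  assumes "\<xi> > 0" and "d > 0" and "\<delta> > 0"
    and "(d * \<xi> ^ 3 - \<delta>) / 2 * real n \<ge> 1"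
    and "finite U" and "finite V" and "finite W"
    and "U \<inter> V = {}" and "U \<inter> W = {}" and "V \<inter> W = {}"
    and "card U = n" and "card V = n" and "card W = n"
    and "three_graph (U \<union> V \<union> W) E"
    and "weakly_quasirandom \<delta> d E U V W"
  shows "\<exists>P :: 'a list set. finite P
     \<and> (\<forall>p\<in>P. tight_path (U \<union> V \<union> W) E p
          \<and> real (tight_path_length p) \<ge> (d * \<xi> ^ 3 - \<delta>) / 2 * real n - 2)
     \<and> (\<forall>p\<in>P. \<forall>q\<in>P. p \<noteq> q \<longrightarrow> set p \<inter> set q = {})
     \<and> real (card (\<Union>p\<in>P. set p)) \<ge> (1 - \<xi>) * (3 * real n)"
proof -
  define L where "L = (d * \<xi> ^ 3 - \<delta>) / 2 * real n"
  have L1: "L \<ge> 1" using assms(4) L_def by simp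
  have ex: "\<exists>P :: 'a list set. finite P \<and> (\<forall>p\<in>P. tight_path (U \<union> V \<union> W) E p \<and> set p \<subseteq> U \<union> V \<union> W
       \<and> L - 2 \<le> real (tight_path_length p))
     \<and> (\<forall>p\<in>P. \<forall>q\<in>P. p \<noteq> q \<longrightarrow> set p \<inter> set q = {})
     \<and> 3 * real n - 3 * \<xi> * real n \<le> real (card (\<Union>p\<in>P. set p))"
    using iterate[OF assms(1) assms(2) L_def L1 assms(5-13) assms(15), of n, rule_format,
        OF subset_refl subset_refl subset_refl assms(11-13)] .
  from ex obtain P :: "'a list set" where PP: "finite P \<and> (\<forall>p\<in>P. tight_path (U \<union> V \<union> W) E p \<and> set p \<subseteq> U \<union> V \<union> W
       \<and> L - 2 \<le> real (tight_path_length p))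
     \<and> (\<forall>p\<in>P. \<forall>q\<in>P. p \<noteq> q \<longrightarrow> set p \<inter> set q = {})
     \<and> 3 * real n - 3 * \<xi> * real n \<le> real (card (\<Union>p\<in>P. set p))" ..
  have "(1 - \<xi>) * (3 * real n) = 3 * real n - 3 * \<xi> * real n" by (simp add: algebra_simps)
  thus ?thesis using PP unfolding L_def by (intro exI[of _ P]) auto
qed

end
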